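(* Assume the setting of the transformation mechanism below, and further assume $a\ge0$ and that every record $r$ has attribute $r.c\ge0$. Let $q(D)=\sum_{r\in D}r.c$. Then the per-record sensitivity of $D\mapsto f(q(D)+a)$ is $\Delta_f(r)=f(r.c+a)-f(a)$, and the mechanism $M(D)=g\big(f(q(D)+a)+Z\big)$, $Z\sim\operatorname{Lap}(0,b)$, satisfies $P$-PRDP with policy function $P(r)=[f(r.c+a)-f(a)]/b$.
   Context: Setting: $b\in(0,\infty)$, $f:[a,\infty)\to\mathbb{R}$ is concave and strictly increasing, $g:\mathbb{R}\to\mathbb{R}$ is measurable, and $Z\sim\operatorname{Lap}(0,b)$ (density $\frac{1}{2b}e^{-|x|/b}$) is independent of the data. Databases are finite multisets of records (including the empty database); $D,D'$ are neighbors differing on record $r$ if their symmetric difference $D\ominus D'=\{r\}$. The per-record sensitivity of a real-valued query $u$ at record $r$ is $\sup\{|u(D)-u(D')|:D\ominus D'=\{r\}\}$. A mechanism $M$ satisfies $P$-PRDP if for every record $r$, every $D,D'$ with $D\ominus D'=\{r\}$, and every measurable $S$, $\Pr[M(D)\in S]\le e^{P(r)}\Pr[M(D')\in S]$. *)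

theory Defs
  imports "HOL-Probability.Probability" "HOL-Library.Multiset"
begin

definition neighbors :: "'r \<Rightarrow> 'r multiset \<Rightarrow> 'r multiset \<Rightarrow> bool" where
  "neighbors r D D' \<longleftrightarrow> (D - D') + (D' - D) = {#r#}"

definition per_record_sensitivity :: "('r multiset \<Rightarrow> real) \<Rightarrow> 'r \<Rightarrow> real" where
  "per_record_sensitivity u r = Sup {\<bar>u D - u D'\<bar> | D D'. neighbors r D D'}"

definition PRDP :: "('r multiset \<Rightarrow> 'b measure) \<Rightarrow> ('r \<Rightarrow> real) \<Rightarrow> bool" where
  "PRDP M P \<longleftrightarrow> (\<forall>r D D' S. neighbors r D D' \<longrightarrow> S \<in> sets (M D) \<longrightarrow>
      measure (M D) S \<le> exp (P r) * measure (M D') S)"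

definition laplace :: "real \<Rightarrow> real measure" where
  "laplace b = density lborel (\<lambda>x. ennreal (exp (- \<bar>x\<bar> / b) / (2 * b)))"

definition sum_query :: "('r \<Rightarrow> real) \<Rightarrow> 'r multiset \<Rightarrow> real" where
  "sum_query c D = sum_mset (image_mset c D)"

definition laplace_transform_mech ::
  "real \<Rightarrow> (real \<Rightarrow> real) \<Rightarrow> ('r multiset \<Rightarrow> real) \<Rightarrow> 'r multiset \<Rightarrow> real measure" where
  "laplace_transform_mech b g u D = distr (laplace b) borel (\<lambda>z. g (u D + z))"

end

theory Submission imports Defs begin

lemma lap_dens_meas: "(\<lambda>x. ennreal (exp (- \<bar>x\<bar> / b) / (2 * b))) \<in> borel_measurable borel"
  by measurable

lemma lap_shift:
  fixes b u v :: real
  assumes b: "0 < b" and A: "A \<in> sets borel"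
  shows "emeasure (laplace b) {z. u + z \<in> A} \<le> ennreal (exp (\<bar>u - v\<bar> / b)) * emeasure (laplace b) {z. v + z \<in> A}"
proof -
  define p where "p = (\<lambda>x::real. exp (- \<bar>x\<bar> / b) / (2 * b))"
  have [measurable]: "p \<in> borel_measurable borel" unfolding p_def by measurable
  have Am[measurable]: "A \<in> sets borel" by fact
  have key: "\<And>w. emeasure (laplace b) {z. w + z \<in> A} = (\<integral>\<^sup>+x. ennreal (p (x - w)) * indicator A x \<partial>lborel)"
  proof -
    fix w :: real
    have ms: "{z. w + z \<in> A} \<in> sets borel" by measurable
    have "emeasure (laplace b) {z. w + z \<in> A} = (\<integral>\<^sup>+z. ennreal (p z) * indicator {z. w + z \<in> A} z \<partial>lborel)"
      unfolding laplace_def p_def using ms by (simp add: emeasure_density)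
    also have "\<dots> = (\<integral>\<^sup>+z. ennreal (p ((w + 1 * z) - w)) * indicator A (w + 1 * z) \<partial>lborel)"
      by (auto intro!: nn_integral_cong simp: indicator_def)
    also have "\<dots> = (\<integral>\<^sup>+x. ennreal (p (x - w)) * indicator A x \<partial>lborel)"
      using nn_integral_real_affine[where c=1 and t=w and f="\<lambda>x. ennreal (p (x - w)) * indicator A x"] by simp
    finally show "emeasure (laplace b) {z. w + z \<in> A} = (\<integral>\<^sup>+x. ennreal (p (x - w)) * indicator A x \<partial>lborel)" .
  qed
  have pw: "ennreal (p (x - u)) * indicator A x \<le> ennreal (exp (\<bar>u - v\<bar> / b)) * (ennreal (p (x - v)) * indicator A x)" for x
  proof -
    have "p (x - u) \<le> exp (\<bar>u - v\<bar> / b) * p (x - v)"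
    proof -
      have "- \<bar>x - u\<bar> / b \<le> \<bar>u - v\<bar> / b + - \<bar>x - v\<bar> / b"
        using b by (simp add: divide_simps)
      hence "exp (- \<bar>x - u\<bar> / b) \<le> exp (\<bar>u - v\<bar> / b) * exp (- \<bar>x - v\<bar> / b)"
        by (simp add: exp_add[symmetric])
      thus ?thesis unfolding p_def using b by (simp add: divide_right_mono mult.assoc[symmetric])
    qed
    then have "ennreal (p (x - u)) \<le> ennreal (exp (\<bar>u - v\<bar> / b)) * ennreal (p (x - v))"
    proof -
      assume h: "p (x - u) \<le> exp (\<bar>u - v\<bar> / b) * p (x - v)"
      have "0 \<le> p (x - v)" unfolding p_def using b by simp
      hence "ennreal (exp (\<bar>u - v\<bar> / b)) * ennreal (p (x - v)) = ennreal (exp (\<bar>u - v\<bar> / b) * p (x - v))"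
        by (simp add: ennreal_mult)
      thus ?thesis using h by (simp add: ennreal_leI)
    qed
    thus ?thesis by (cases "x \<in> A") (auto simp: mult.assoc)
  qed
  show ?thesis
    unfolding key
    by (subst nn_integral_cmult[symmetric]) (auto intro!: nn_integral_mono pw)
qed

lemma lap_finite:
  fixes b :: real assumes b: "0 < b"
  shows "emeasure (laplace b) X < \<infinity>"
proof -
  define E where "E = exponential_density (1/b)"
  have [measurable]: "E \<in> borel_measurable borel" unfolding E_def by measurable
  have E1: "(\<integral>\<^sup>+x. ennreal (E x) \<partial>lborel) = 1"
  proof -
    interpret prob_space "density lborel E" unfolding E_def using prob_space_exponential_density[of "1/b"] b by simp
    have "emeasure (density lborel E) UNIV = 1" using emeasure_space_1 by simp
    thus ?thesis by (simp add: emeasure_density)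
  qed
  have E2: "(\<integral>\<^sup>+x. ennreal (E (-x)) \<partial>lborel) = 1"
    using nn_integral_real_affine[where c="-1" and t=0 and f="\<lambda>x. ennreal (E x)"] E1 by simp
  have "emeasure (laplace b) X \<le> emeasure (laplace b) (space (laplace b))"
    by (rule emeasure_space)
  also have "\<dots> = (\<integral>\<^sup>+x. ennreal (exp (- \<bar>x\<bar> / b) / (2 * b)) \<partial>lborel)"
    unfolding laplace_def by (simp add: emeasure_density)
  also have "\<dots> \<le> (\<integral>\<^sup>+x. ennreal (E x) + ennreal (E (-x)) \<partial>lborel)"
  proof (rule nn_integral_mono)
    fix x :: real
    have "exp (- \<bar>x\<bar> / b) / (2 * b) \<le> E x + E (-x)"
      unfolding E_def exponential_density_def using b
      by (cases "x < 0"; cases "x = 0") (auto simp: field_simps)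
    thus "ennreal (exp (- \<bar>x\<bar> / b) / (2 * b)) \<le> ennreal (E x) + ennreal (E (-x))"
      by (metis ennreal_leI ennreal_plus E_def exponential_density_def b le_less linorder_not_le
          mult_nonneg_nonneg exp_ge_zero divide_pos_pos zero_less_one less_imp_le order.refl)
  qed
  also have "\<dots> = 2" by (subst nn_integral_add) (auto simp: E1 E2)
  finally show ?thesis by (simp add: le_less_trans)
qed


lemma concave_incr:
  fixes f :: "real \<Rightarrow> real"
  assumes cf: "concave_on {a..} f" and x: "a \<le> x" and t: "0 \<le> t"
  shows "f (x + t) - f x \<le> f (a + t) - f a"
proof (cases "x = a \<or> t = 0")
  case True thus ?thesis by auto
next
  case False
  hence xa: "a < x" and tp: "0 < t" using x t by auto
  define s where "s = x + t - a"
  have s: "0 < s" using xa tp s_def by simp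
  define al where "al = t / s"
  have al0: "0 \<le> al" and al1: "al \<le> 1" using s tp xa unfolding al_def s_def by (auto simp: divide_simps)
  have als: "al * s = t" using s unfolding al_def by simp
  have "(1 - al) * (x + t) + al * a = x + t - al * s" by (simp add: s_def algebra_simps)
  hence e1: "(1 - al) *\<^sub>R (x + t) + al *\<^sub>R a = x" using als by simp
  have "(1 - al) * a + al * (x + t) = a + al * s" by (simp add: s_def algebra_simps)
  hence e2: "(1 - al) *\<^sub>R a + al *\<^sub>R (x + t) = a + t" using als by simp
  have h1: "f x \<ge> (1 - al) * f (x + t) + al * f a"
    using concave_onD[OF cf al0 al1, of "x + t" a] e1 x t by simp
  have h2: "f (a + t) \<ge> (1 - al) * f a + al * f (x + t)"
    using concave_onD[OF cf al0 al1, of a "x + t"] e2 x t by simp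
  from h1 h2 show ?thesis by (simp add: algebra_simps)
qed

lemma neighbors_cases:
  assumes "neighbors r D D'"
  shows "D = D' + {#r#} \<or> D' = D + {#r#}"
proof -
  have "(D - D') + (D' - D) = {#r#}" using assms unfolding neighbors_def .
  hence "D - D' = {#r#} \<and> D' - D = {#} \<or> D - D' = {#} \<and> D' - D = {#r#}"
    by (simp add: union_is_single)
  thus ?thesis
    by (metis add.commute subset_mset.add_diff_inverse Diff_eq_empty_iff_mset)
qed


lemma sum_query_nonneg: "(\<And>r. 0 \<le> c r) \<Longrightarrow> 0 \<le> sum_query c D"
  unfolding sum_query_def by (induction D) auto

lemma mech_measure:
  assumes g[measurable]: "g \<in> borel_measurable borel" and S: "S \<in> sets borel"
  shows "measure (laplace_transform_mech b g u D) S = measure (laplace b) {z. u D + z \<in> g -` S}"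
proof -
  have [measurable]: "(\<lambda>z. g (u D + z)) \<in> borel_measurable (laplace b)"
    unfolding laplace_def by measurable
  show ?thesis unfolding laplace_transform_mech_def
    by (subst measure_distr) (auto simp: S laplace_def vimage_def)
qed

theorem mainTheorem9:
  fixes b a :: real and f g :: "real \<Rightarrow> real" and c :: "'r \<Rightarrow> real"
  assumes b_pos: "0 < b"
    and f_concave: "concave_on {a..} f"
    and f_incr: "strict_mono_on {a..} f"
    and g_meas: "g \<in> borel_measurable borel"
    and a_nonneg: "0 \<le> a"
    and c_nonneg: "\<And>r. 0 \<le> c r"
  shows "(\<forall>r. per_record_sensitivity (\<lambda>D. f (sum_query c D + a)) r = f (c r + a) - f a)
       \<and> PRDP (laplace_transform_mech b g (\<lambda>D. f (sum_query c D + a)))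
              (\<lambda>r. (f (c r + a) - f a) / b)"
proof -
  define u where "u = (\<lambda>D. f (sum_query c D + a))"
  have mono: "f x \<le> f y" if "a \<le> x" "x \<le> y" for x y
    using f_incr that by (cases "x = y") (auto simp: strict_mono_on_def intro: less_imp_le)
  have step: "\<bar>u (D' + {#r#}) - u D'\<bar> \<le> f (c r + a) - f a" for r D'
  proof -
    have q0: "0 \<le> sum_query c D'" by (rule sum_query_nonneg[OF c_nonneg])
    have qe: "sum_query c (D' + {#r#}) = sum_query c D' + c r" by (simp add: sum_query_def)
    have "f (sum_query c D' + a) \<le> f (sum_query c D' + c r + a)"
      using q0 c_nonneg[of r] by (intro mono) auto
    moreover have "f ((sum_query c D' + a) + c r) - f (sum_query c D' + a) \<le> f (a + c r) - f a"
      using q0 c_nonneg[of r] by (intro concave_incr[OF f_concave]) auto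
    ultimately show ?thesis unfolding u_def qe by (simp add: algebra_simps)
  qed
  have bnd: "\<bar>u D - u D'\<bar> \<le> f (c r + a) - f a" if "neighbors r D D'" for r D D'
    using neighbors_cases[OF that] step[of D' r] step[of D r] by (auto simp: abs_minus_commute)
  have part1: "per_record_sensitivity u r = f (c r + a) - f a" for r
    unfolding per_record_sensitivity_def
  proof (rule cSup_eq_maximum)
    have nb: "neighbors r {#r#} {#}" by (simp add: neighbors_def)
    have "f a \<le> f (c r + a)" using c_nonneg[of r] by (intro mono) auto
    hence "\<bar>u {#r#} - u {#}\<bar> = f (c r + a) - f a" by (simp add: u_def sum_query_def)
    with nb show "f (c r + a) - f a \<in> {\<bar>u D - u D'\<bar> |D D'. neighbors r D D'}" by force
  next
    fix x assume "x \<in> {\<bar>u D - u D'\<bar> |D D'. neighbors r D D'}"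
    thus "x \<le> f (c r + a) - f a" using bnd by auto
  qed
  have part2: "PRDP (laplace_transform_mech b g u) (\<lambda>r. (f (c r + a) - f a) / b)"
    unfolding PRDP_def
  proof (intro allI impI)
    fix r D D' S
    assume nb: "neighbors r D D'" and S0: "S \<in> sets (laplace_transform_mech b g u D)"
    have S: "S \<in> sets borel" using S0 by (simp add: laplace_transform_mech_def)
    have A: "g -` S \<in> sets borel" using measurable_sets[OF g_meas S] by simp
    define K where "K = exp (\<bar>u D - u D'\<bar> / b)"
    define m1 where "m1 = measure (laplace b) {z. u D + z \<in> g -` S}"
    define m2 where "m2 = measure (laplace b) {z. u D' + z \<in> g -` S}"
    have e: "emeasure (laplace b) {z. u D + z \<in> g -` S} \<le> ennreal K * emeasure (laplace b) {z. u D' + z \<in> g -` S}"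
      unfolding K_def by (rule lap_shift[OF b_pos A])
    have "ennreal m1 \<le> ennreal K * ennreal m2"
      using e lap_finite[OF b_pos] unfolding m1_def m2_def
      by (simp add: emeasure_eq_ennreal_measure less_top[symmetric])
    hence "ennreal m1 \<le> ennreal (K * m2)" by (simp add: ennreal_mult K_def m2_def)
    hence m: "m1 \<le> K * m2" using ennreal_le_iff K_def m2_def
      by (metis ennreal_le_iff2 exp_ge_zero measure_nonneg mult_nonneg_nonneg)
    have "K \<le> exp ((f (c r + a) - f a) / b)"
      unfolding K_def using bnd[OF nb] b_pos by (simp add: divide_right_mono)
    hence "K * m2 \<le> exp ((f (c r + a) - f a) / b) * m2"
      by (rule mult_right_mono) (simp add: m2_def)
    with m show "measure (laplace_transform_mech b g u D) S
          \<le> exp ((f (c r + a) - f a) / b) * measure (laplace_transform_mech b g u D') S"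
      using mech_measure[OF g_meas S, of b u D] mech_measure[OF g_meas S, of b u D']
      unfolding m1_def m2_def by (metis order_trans)
  qed
  show ?thesis using part1 part2 unfolding u_def by simp
qed

end
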